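(* Let $A\in H_n$ and $B\in H_k$. Then there exists a positive trace-preserving linear map $\Phi:H_n\to H_k$ with $\Phi(A)=B$ if and only if $\operatorname{tr}A=\operatorname{tr}B$, $\|A_+\|_1\geq\|B_+\|_1$ and $\|A_-\|_1\geq\|B_-\|_1$.
   Context: $H_n$ denotes the real vector space of $n\times n$ complex Hermitian matrices; $X\geq0$ means $X$ is positive semidefinite. A linear map $\Phi:H_n\to H_k$ is positive if $\Phi(X)\geq0$ for all $X\geq0$, and trace-preserving if $\operatorname{tr}\Phi(X)=\operatorname{tr}X$ for all $X\in H_n$. Every $A\in H_n$ decomposes uniquely as $A=A_+-A_-$ with $A_+,A_-$ positive semidefinite and $A_+A_-=0$. $\|\cdot\|_1$ is the trace norm (sum of singular values). *)

theory Defs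
  imports "HOL-Analysis.Analysis"
begin

definition conj_transpose :: "complex^'n^'m \<Rightarrow> complex^'m^'n" where
  "conj_transpose M = (\<chi> i j. cnj (M $ j $ i))"

definition hermitian :: "complex^'n^'n \<Rightarrow> bool" where
  "hermitian M \<longleftrightarrow> conj_transpose M = M"

definition psd :: "complex^'n^'n \<Rightarrow> bool" where
  "psd M \<longleftrightarrow> hermitian M \<and>
     (\<forall>x :: complex^'n. 0 \<le> Re (\<Sum>i\<in>UNIV. cnj (x $ i) * (M *v x) $ i))"

definition pos_part :: "complex^'n^'n \<Rightarrow> complex^'n^'n" where
  "pos_part A = (THE P. \<exists>N. psd P \<and> psd N \<and> A = P - N \<and> P ** N = 0)"

definition neg_part :: "complex^'n^'n \<Rightarrow> complex^'n^'n" where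
  "neg_part A = (THE N. \<exists>P. psd P \<and> psd N \<and> A = P - N \<and> P ** N = 0)"

definition psd_sqrt :: "complex^'n^'n \<Rightarrow> complex^'n^'n" where
  "psd_sqrt Y = (THE R. psd R \<and> R ** R = Y)"

text \<open>Trace norm = sum of singular values = trace of |X| = sqrt(X* X).\<close>
definition trace_norm :: "complex^'n^'n \<Rightarrow> real" where
  "trace_norm X = Re (trace (psd_sqrt (conj_transpose X ** X)))"

end

theory Submission
  imports Defs
begin


definition cinner :: "complex^'n \<Rightarrow> complex^'n \<Rightarrow> complex" where
  "cinner x y = (\<Sum>i\<in>UNIV. cnj (x$i) * y$i)"

lemma cinner_add_right: "cinner x (y + z) = cinner x y + cinner x z"
  by (simp add: cinner_def distrib_left sum.distrib)
lemma cinner_add_left: "cinner (x + y) z = cinner x z + cinner y z"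
  by (simp add: cinner_def distrib_right sum.distrib)
lemma cinner_diff_right: "cinner x (y - z) = cinner x y - cinner x z"
  by (simp add: cinner_def right_diff_distrib sum_subtractf)
lemma cinner_diff_left: "cinner (x - y) z = cinner x z - cinner y z"
  by (simp add: cinner_def left_diff_distrib sum_subtractf)
lemma cinner_smult_right: "cinner x (c *s y) = c * cinner x y"
  by (simp add: cinner_def sum_distrib_left ac_simps)
lemma cinner_smult_left: "cinner (c *s x) y = cnj c * cinner x y"
  by (simp add: cinner_def sum_distrib_left ac_simps)
lemma vec_scaleR_c: "(r *\<^sub>R (x::complex^'n))$i = of_real r * x$i"
proof -
  have "(r *\<^sub>R x)$i = r *\<^sub>R (x$i)" by (rule vector_scaleR_component)
  also have "\<dots> = of_real r * x$i" by (rule scaleR_conv_of_real)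
  finally show ?thesis .
qed
lemma cinner_scaleR_right: "cinner x (r *\<^sub>R y) = of_real r * cinner x y"
  by (simp add: cinner_def sum_distrib_left vec_scaleR_c mult.left_commute del: vector_scaleR_component)
lemma cinner_scaleR_left: "cinner (r *\<^sub>R x) y = of_real r * cinner x y"
  by (simp add: cinner_def sum_distrib_left vec_scaleR_c mult.assoc del: vector_scaleR_component)
lemma cinner_zero_right[simp]: "cinner x 0 = 0" by (simp add: cinner_def)
lemma cinner_zero_left[simp]: "cinner 0 x = 0" by (simp add: cinner_def)
lemma cinner_sum_right: "cinner x (\<Sum>i\<in>I. f i) = (\<Sum>i\<in>I. cinner x (f i))"
  by (induction I rule: infinite_finite_induct) (auto simp: cinner_add_right)
lemma cinner_sum_left: "cinner (\<Sum>i\<in>I. f i) x = (\<Sum>i\<in>I. cinner (f i) x)"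
  by (induction I rule: infinite_finite_induct) (auto simp: cinner_add_left)
lemma cinner_cnj: "cnj (cinner x y) = cinner y x"
  by (simp add: cinner_def ac_simps)

lemma cinner_self: "cinner x x = of_real ((norm x)^2)"
proof -
  have "cinner x x = (\<Sum>i\<in>UNIV. of_real ((cmod (x$i))^2))"
    unfolding cinner_def by (intro sum.cong refl) (metis complex_norm_square mult.commute)
  also have "\<dots> = of_real (\<Sum>i\<in>UNIV. (cmod (x$i))^2)" by simp
  also have "(\<Sum>i\<in>UNIV. (cmod (x$i))^2) = (norm x)^2"
    by (simp add: norm_vec_def L2_set_def sum_nonneg)
  finally show ?thesis .
qed

lemma cinner_self_eq_0: "cinner x x = 0 \<longleftrightarrow> x = 0"
  by (simp add: cinner_self)

lemma mv_smult: "(M::'a::comm_semiring_1^'n^'m) *v (c *s x) = c *s (M *v x)"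
proof -
  have *: "a * (c * b) = c * (a * b)" for a b :: 'a by (rule mult.left_commute)
  show ?thesis by (simp add: matrix_vector_mult_def vec_eq_iff sum_distrib_left *)
qed
lemma mv_scaleR: "M *v (r *\<^sub>R x) = r *\<^sub>R (M *v (x::complex^'n))"
  by (simp add: matrix_vector_mult_def vec_eq_iff sum_distrib_left mult.left_commute vec_scaleR_c del: vector_scaleR_component)
lemma mv_sum: "M *v (\<Sum>i\<in>I. f i) = (\<Sum>i\<in>I. M *v f i)"
  by (induction I rule: infinite_finite_induct) (auto simp: matrix_vector_right_distrib)

lemma hermitian_entry: "hermitian M \<Longrightarrow> M$i$j = cnj (M$j$i)"
  unfolding hermitian_def conj_transpose_def by (metis vec_lambda_beta)

lemma hermitian_entry': "hermitian M \<Longrightarrow> cnj (M$i$j) = M$j$i"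
  using hermitian_entry[of M j i] by simp

lemma hermitian_cinner: assumes "hermitian M"
  shows "cinner x (M *v y) = cinner (M *v x) y"
proof -
  have "cinner x (M *v y) = (\<Sum>i\<in>UNIV. \<Sum>j\<in>UNIV. cnj (x$i) * M$i$j * y$j)"
    by (simp add: cinner_def matrix_vector_mult_def sum_distrib_left ac_simps)
  also have "\<dots> = (\<Sum>j\<in>UNIV. \<Sum>i\<in>UNIV. cnj (x$i) * M$i$j * y$j)" by (rule sum.swap)
  also have "\<dots> = cinner (M *v x) y"
    by (simp add: cinner_def matrix_vector_mult_def sum_distrib_right sum_distrib_left ac_simps hermitian_entry'[OF assms])
  finally show ?thesis .
qed

lemma hermitian_quad_real: assumes "hermitian M"
  shows "cinner x (M *v x) = of_real (Re (cinner x (M *v x)))"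
proof -
  have "cnj (cinner x (M *v x)) = cinner x (M *v x)"
    using hermitian_cinner[OF assms] cinner_cnj by metis
  then show ?thesis by (metis Reals_cnj_iff complex_is_Real_iff of_real_Re)
qed

lemma psd_quad: "psd M \<Longrightarrow> cinner x (M *v x) = of_real (Re (cinner x (M *v x))) \<and> 0 \<le> Re (cinner x (M *v x))"
  unfolding psd_def using hermitian_quad_real[of M x] by (auto simp: cinner_def)

lemma psd_cinner_def: "psd M \<longleftrightarrow> hermitian M \<and> (\<forall>x. 0 \<le> Re (cinner x (M *v x)))"
  by (simp add: psd_def cinner_def)



definition onb :: "('n \<Rightarrow> complex^'n) \<Rightarrow> bool" where
  "onb v \<longleftrightarrow> (\<forall>i j. cinner (v i) (v j) = (if i = j then 1 else 0))"

lemma onb_complete: fixes v :: "'n \<Rightarrow> complex^'n" assumes "onb v"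
  shows "(\<Sum>i\<in>UNIV. v i $ k * cnj (v i $ l)) = (if k = l then 1 else 0)"
proof -
  define U :: "complex^'n^'n" where "U = (\<chi> k i. v i $ k)"
  have "conj_transpose U ** U = mat 1"
    using assms unfolding onb_def
    by (simp add: U_def conj_transpose_def matrix_matrix_mult_def mat_def vec_eq_iff cinner_def)
  then have "U ** conj_transpose U = mat 1" using matrix_left_right_inverse by blast
  then have "(U ** conj_transpose U) $ k $ l = mat 1 $ k $ l" by simp
  then show ?thesis
    by (simp add: U_def conj_transpose_def matrix_matrix_mult_def mat_def)
qed

lemma onb_expand: assumes "onb v"
  shows "x = (\<Sum>i\<in>UNIV. cinner (v i) x *s v i)"
proof -
  have "(\<Sum>i\<in>UNIV. cinner (v i) x *s v i) $ k = x $ k" for k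
  proof -
    have "(\<Sum>i\<in>UNIV. cinner (v i) x *s v i) $ k = (\<Sum>i\<in>UNIV. \<Sum>l\<in>UNIV. x$l * (v i $ k * cnj (v i $ l)))"
      by (simp add: cinner_def sum_distrib_right sum_distrib_left sum_component mult_ac)
    also have "\<dots> = (\<Sum>l\<in>UNIV. x$l * (\<Sum>i\<in>UNIV. v i $ k * cnj (v i $ l)))"
      by (subst sum.swap) (simp add: sum_distrib_left)
    also have "\<dots> = x $ k" by (simp add: onb_complete[OF assms] if_distrib cong: if_cong)
    finally show ?thesis .
  qed
  then show ?thesis by (simp add: vec_eq_iff)
qed

lemma onb_trace: assumes "onb v"
  shows "trace M = (\<Sum>i\<in>UNIV. cinner (v i) (M *v v i))"
proof -
  have "(\<Sum>i\<in>UNIV. cinner (v i) (M *v v i)) = (\<Sum>i\<in>UNIV. \<Sum>k\<in>UNIV. \<Sum>l\<in>UNIV. M$k$l * (v i $ l * cnj (v i $ k)))"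
    by (simp add: cinner_def matrix_vector_mult_def sum_distrib_left ac_simps)
  also have "\<dots> = (\<Sum>k\<in>UNIV. \<Sum>i\<in>UNIV. \<Sum>l\<in>UNIV. M$k$l * (v i $ l * cnj (v i $ k)))"
    by (rule sum.swap)
  also have "\<dots> = (\<Sum>k\<in>UNIV. \<Sum>l\<in>UNIV. \<Sum>i\<in>UNIV. M$k$l * (v i $ l * cnj (v i $ k)))"
    by (intro sum.cong refl sum.swap)
  also have "\<dots> = (\<Sum>k\<in>UNIV. \<Sum>l\<in>UNIV. M$k$l * (if l = k then 1 else 0))"
    by (simp add: sum_distrib_left[symmetric] onb_complete[OF assms])
  also have "\<dots> = trace M" by (simp add: trace_def if_distrib cong: if_cong)
  finally show ?thesis by simp
qed

lemma onb_matrix_ext: assumes "onb v" "\<And>i. M *v v i = N *v v i"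
  shows "M = N"
proof -
  have e: "K *v x = (\<Sum>i\<in>UNIV. cinner (v i) x *s (K *v v i))" for K x
  proof -
    have "K *v x = K *v (\<Sum>i\<in>UNIV. cinner (v i) x *s v i)"
      by (rule arg_cong[OF onb_expand[OF assms(1)]])
    also have "\<dots> = (\<Sum>i\<in>UNIV. cinner (v i) x *s (K *v v i))" by (simp only: mv_sum mv_smult)
    finally show ?thesis .
  qed
  have "M *v x = N *v x" for x
    by (simp only: e[of M x] e[of N x] assms(2))
  then show ?thesis by (simp add: matrix_eq)
qed

definition opm :: "('n \<Rightarrow> complex^'n) \<Rightarrow> ('n \<Rightarrow> real) \<Rightarrow> complex^'n^'n" where
  "opm v f = (\<chi> k l. \<Sum>i\<in>UNIV. of_real (f i) * v i $ k * cnj (v i $ l))"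

lemma opm_mv: "opm v f *v x = (\<Sum>i\<in>UNIV. (of_real (f i) * cinner (v i) x) *s v i)"
proof -
  have "(opm v f *v x) $ k = (\<Sum>i\<in>UNIV. (of_real (f i) * cinner (v i) x) *s v i) $ k" for k
  proof -
    have "(opm v f *v x) $ k = (\<Sum>l\<in>UNIV. \<Sum>i\<in>UNIV. of_real (f i) * v i $ k * cnj (v i $ l) * x $ l)"
      by (simp add: opm_def matrix_vector_mult_def sum_distrib_right)
    also have "\<dots> = (\<Sum>i\<in>UNIV. \<Sum>l\<in>UNIV. of_real (f i) * v i $ k * cnj (v i $ l) * x $ l)"
      by (rule sum.swap)
    also have "\<dots> = (\<Sum>i\<in>UNIV. (of_real (f i) * cinner (v i) x) *s v i) $ k"
      by (simp add: sum_component cinner_def sum_distrib_left sum_distrib_right ac_simps)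
    finally show ?thesis .
  qed
  then show ?thesis by (simp add: vec_eq_iff)
qed

lemma opm_basis: assumes "onb v" shows "opm v f *v v j = of_real (f j) *s v j"
proof -
  have "opm v f *v v j = (\<Sum>i\<in>UNIV. (if i = j then of_real (f j) *s v j else 0))"
    unfolding opm_mv using assms unfolding onb_def by (intro sum.cong refl) auto
  also have "\<dots> = of_real (f j) *s v j" by simp
  finally show ?thesis .
qed

lemma opm_mult: assumes "onb v" shows "opm v f ** opm v g = opm v (\<lambda>i. f i * g i)"
  by (rule onb_matrix_ext[OF assms])
     (simp add: matrix_vector_mul_assoc[symmetric] opm_basis[OF assms] mv_smult vector_smult_assoc)

lemma opm_diff: "opm v f - opm v g = opm v (\<lambda>i. f i - g i)"
  by (simp add: opm_def vec_eq_iff sum_subtractf[symmetric] left_diff_distrib)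

lemma opm_hermitian: "hermitian (opm v f)"
  by (simp add: hermitian_def conj_transpose_def opm_def vec_eq_iff ac_simps)

lemma opm_quad: "cinner x (opm v f *v x) = of_real (\<Sum>i\<in>UNIV. f i * (cmod (cinner (v i) x))^2)"
proof -
  have "cinner x (opm v f *v x) = (\<Sum>i\<in>UNIV. of_real (f i) * (cinner (v i) x * cnj (cinner (v i) x)))"
    by (simp add: opm_mv cinner_sum_right cinner_smult_right cinner_cnj ac_simps)
  also have "\<dots> = (\<Sum>i\<in>UNIV. of_real (f i * (cmod (cinner (v i) x))^2))"
    by (simp add: complex_norm_square[symmetric])
  finally show ?thesis by simp
qed

lemma opm_psd: assumes "\<And>i. 0 \<le> f i" shows "psd (opm v f)"
  unfolding psd_cinner_def using assms by (simp add: opm_hermitian opm_quad sum_nonneg)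

lemma opm_trace: assumes "onb v" shows "trace (opm v f) = of_real (\<Sum>i\<in>UNIV. f i)"
  by (simp add: onb_trace[OF assms] opm_basis[OF assms] cinner_smult_right)
     (use assms in \<open>simp add: onb_def\<close>)



lemma cont_nth: "continuous_on S (\<lambda>x::complex^'n. x $ i)"
  by (rule linear_continuous_on[OF bounded_linear_vec_nth])

lemma cont_cinner: "continuous_on S (\<lambda>x::complex^'n. cinner u x)"
  unfolding cinner_def by (intro continuous_intros cont_nth)

lemma cont_quad: "continuous_on S (\<lambda>x::complex^'n. Re (cinner x (M *v x)))"
  unfolding cinner_def matrix_vector_mult_def
  by (simp, intro continuous_intros cont_nth)

lemma norm_sq_cinner: "(norm x)^2 = Re (cinner x x)"
  by (simp add: cinner_self)

lemma complement_nonempty: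
  fixes v :: "'n \<Rightarrow> complex^'n"
  assumes "a \<notin> S"
  shows "\<exists>x. norm x = 1 \<and> (\<forall>j\<in>S. cinner (v j) x = 0)"
proof -
  define W :: "complex^'n^'n" where "W = (\<chi> r c. if r \<in> S then cnj (v r $ c) else 0)"
  have "row a W = 0" using assms by (simp add: W_def row_def vec_eq_iff)
  then have "det W = 0" by (rule det_zero_row)
  then have "\<not> invertible W" by (simp add: invertible_det_nz)
  then have "\<not> (\<exists>B. B ** W = mat 1)" by (simp add: invertible_left_inverse)
  then obtain x where x: "W *v x = 0" "x \<noteq> 0" using matrix_left_invertible_ker by blast
  have "cinner (v j) x = 0" if "j \<in> S" for j
  proof -
    have "(W *v x) $ j = cinner (v j) x" using that by (simp add: W_def matrix_vector_mult_def cinner_def)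
    then show ?thesis using x by simp
  qed
  moreover have "norm x \<noteq> 0" using x by simp
  ultimately show ?thesis
    by (intro exI[of _ "(1 / norm x) *\<^sub>R x"]) (simp add: cinner_scaleR_right)
qed

lemma eigen_in_complement:
  fixes A :: "complex^'n^'n" and v :: "'n \<Rightarrow> complex^'n"
  assumes herm: "hermitian A"
    and eig: "\<And>j. j \<in> S \<Longrightarrow> A *v v j = of_real (lam j) *s v j"
    and ne: "\<exists>x. norm x = 1 \<and> (\<forall>j\<in>S. cinner (v j) x = 0)"
  shows "\<exists>x l. norm x = 1 \<and> (\<forall>j\<in>S. cinner (v j) x = 0) \<and> A *v x = of_real l *s x"
proof -
  define K where "K = {x::complex^'n. norm x = 1 \<and> (\<forall>j\<in>S. cinner (v j) x = 0)}"
  define q where "q x = Re (cinner x (A *v x))" for x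
  have Keq: "K = {x. norm x = 1} \<inter> (\<Inter>j\<in>S. {x. cinner (v j) x = 0})" by (auto simp: K_def)
  have "closed K" unfolding Keq
    by (intro closed_Int closed_INT ballI closed_Collect_eq continuous_intros cont_cinner)
  moreover have "bounded K" unfolding K_def by (rule boundedI[of _ 1]) auto
  ultimately have "compact K" by (simp add: compact_eq_bounded_closed)
  moreover have "K \<noteq> {}" using ne by (auto simp: K_def)
  moreover have "continuous_on K q" unfolding q_def by (rule cont_quad)
  ultimately obtain x0 where x0: "x0 \<in> K" and max: "\<And>y. y \<in> K \<Longrightarrow> q y \<le> q x0"
    using continuous_attains_sup by metis
  define l where "l = q x0"
  define w where "w = A *v x0 - of_real l *s x0"
  have n0: "norm x0 = 1" and o0: "\<And>j. j \<in> S \<Longrightarrow> cinner (v j) x0 = 0" using x0 by (auto simp: K_def)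
  have x0x0: "cinner x0 x0 = 1" using n0 by (simp add: cinner_self)
  have qx0: "cinner x0 (A *v x0) = of_real l"
    unfolding l_def q_def by (rule hermitian_quad_real[OF herm])
  have Ax0: "A *v x0 = w + of_real l *s x0" by (simp add: w_def)
  have ow: "cinner (v j) w = 0" if "j \<in> S" for j
  proof -
    have "cinner (v j) (A *v x0) = cinner (A *v v j) x0" by (rule hermitian_cinner[OF herm])
    also have "\<dots> = 0" using eig[OF that] o0[OF that] by (simp add: cinner_smult_left)
    finally show ?thesis by (simp add: w_def cinner_diff_right cinner_smult_right o0[OF that])
  qed
  have x0w: "cinner x0 w = 0"
    by (simp add: w_def cinner_diff_right cinner_smult_right qx0 x0x0)
  then have wx0: "cinner w x0 = 0" by (metis cinner_cnj complex_cnj_zero)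
  define s where "s = (norm w)^2"
  define c where "c = Re (cinner w (A *v w))"
  have ww: "cinner w w = of_real s" by (simp add: s_def cinner_self)
  have key: "2 * t * s + t^2 * (c - l * s) \<le> 0" for t :: real
  proof -
    define z where "z = x0 + t *\<^sub>R w"
    have zz: "cinner z z = of_real (1 + t^2 * s)"
      by (simp add: z_def cinner_add_left cinner_add_right cinner_scaleR_left cinner_scaleR_right
          x0x0 x0w wx0 ww power2_eq_square)
    have nz: "(norm z)^2 = 1 + t^2 * s" using zz by (simp add: norm_sq_cinner)
    have spos: "0 \<le> s" by (simp add: s_def)
    have "0 < 1 + t^2 * s" using spos by (simp add: add_pos_nonneg)
    then have nzpos: "norm z > 0" using nz
      by (metis norm_ge_zero order_less_le power_zero_numeral zero_less_power2)
    have "cinner w (A *v x0) = of_real s" by (simp add: Ax0 cinner_add_right cinner_smult_right ww wx0)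
    moreover have "cinner x0 (A *v w) = of_real s"
      by (simp add: hermitian_cinner[OF herm] Ax0 cinner_add_left cinner_smult_left ww x0w)
    ultimately have qz: "q z = l + 2 * t * s + t^2 * c"
      by (simp add: q_def z_def mv_scaleR matrix_vector_right_distrib cinner_add_left cinner_add_right
          cinner_scaleR_left cinner_scaleR_right qx0 c_def power2_eq_square algebra_simps)
    define z' where "z' = (1 / norm z) *\<^sub>R z"
    have "norm z' = 1" using nzpos by (simp add: z'_def)
    moreover have "\<forall>j\<in>S. cinner (v j) z' = 0"
      by (simp add: z'_def z_def cinner_scaleR_right cinner_add_right o0 ow)
    ultimately have "z' \<in> K" by (simp add: K_def)
    then have "q z' \<le> l" using max by (simp add: l_def)
    moreover have "q z' = q z / (norm z)^2"
      by (simp add: q_def z'_def mv_scaleR cinner_scaleR_left cinner_scaleR_right power2_eq_square divide_simps)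
    ultimately have "q z \<le> l * (norm z)^2" using nzpos by (simp add: divide_simps)
    then show ?thesis using qz nz by (simp add: algebra_simps)
  qed
  have "s = 0"
  proof (rule ccontr)
    assume "s \<noteq> 0"
    then have spos: "s > 0" by (simp add: s_def)
    define d where "d = \<bar>c - l * s\<bar> + 1"
    have dpos: "d > 0" by (simp add: d_def)
    define t where "t = s / d"
    have tpos: "t > 0" using spos dpos by (simp add: t_def)
    have "t * \<bar>c - l * s\<bar> < s"
    proof -
      have "t * \<bar>c - l * s\<bar> = s * (\<bar>c - l * s\<bar> / d)" by (simp add: t_def)
      also have "\<bar>c - l * s\<bar> / d < 1" using dpos by (simp add: d_def)
      then have "s * (\<bar>c - l * s\<bar> / d) < s * 1" using spos by (intro mult_strict_left_mono)
      finally show ?thesis by simp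
    qed
    moreover have "- (t * \<bar>c - l * s\<bar>) \<le> t * (c - l * s)"
    proof -
      have "t * (- (c - l * s)) \<le> t * \<bar>c - l * s\<bar>"
        using tpos by (intro mult_left_mono) auto
      then show ?thesis by (simp add: algebra_simps)
    qed
    ultimately have "2 * s + t * (c - l * s) > 0" using spos by linarith
    then have "t * (2 * s + t * (c - l * s)) > 0" using tpos by simp
    moreover have "t * (2 * s + t * (c - l * s)) = 2 * t * s + t^2 * (c - l * s)"
      by (simp add: algebra_simps power2_eq_square)
    ultimately show False using key[of t] by simp
  qed
  then have "w = 0" by (simp add: s_def)
  then have "A *v x0 = of_real l *s x0" by (simp add: Ax0)
  then show ?thesis using x0 by (auto simp: K_def)
qed

lemma spectral_partial:
  fixes A :: "complex^'n^'n" and S :: "'n set"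
  assumes herm: "hermitian A" and "finite S"
  shows "\<exists>v lam. (\<forall>i\<in>S. \<forall>j\<in>S. cinner (v i) (v j) = (if i = j then 1 else 0)) \<and>
                 (\<forall>i\<in>S. A *v v i = of_real (lam i) *s v i)"
  using assms(2)
proof (induction S rule: finite_induct)
  case empty
  then show ?case by auto
next
  case (insert a S)
  then obtain v lam where on: "\<forall>i\<in>S. \<forall>j\<in>S. cinner (v i) (v j) = (if i = j then 1 else 0)"
    and eg: "\<forall>i\<in>S. A *v v i = of_real (lam i) *s v i" by blast
  obtain x l where x: "norm x = 1" "\<forall>j\<in>S. cinner (v j) x = 0" "A *v x = of_real l *s x"
    using eigen_in_complement[OF herm, of S v lam] eg complement_nonempty[OF insert(2), of v] by blast
  have xx: "cinner x x = 1" using x(1) by (simp add: cinner_self)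
  have xv: "cinner x (v j) = 0" if "j \<in> S" for j using x(2) that by (metis cinner_cnj complex_cnj_zero)
  show ?case
    apply (rule exI[of _ "v(a := x)"], rule exI[of _ "lam(a := l)"])
    using on eg x xx xv insert(2) by auto
qed

lemma spectral:
  fixes A :: "complex^'n^'n"
  assumes "hermitian A"
  shows "\<exists>v lam. onb v \<and> (\<forall>i. A *v v i = of_real (lam i) *s v i)"
proof -
  have "finite (UNIV :: 'n set)" by simp
  from spectral_partial[OF assms this] show ?thesis unfolding onb_def by simp
qed

lemma spectral_opm:
  assumes "onb v" "\<And>i. A *v v i = of_real (lam i) *s v i"
  shows "A = opm v lam"
  by (rule onb_matrix_ext[OF assms(1)]) (simp add: opm_basis[OF assms(1)] assms(2))



lemma conj_transpose_mult: "conj_transpose (X ** Y) = conj_transpose Y ** conj_transpose (X::complex^'n^'n)"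
  by (simp add: conj_transpose_def matrix_matrix_mult_def vec_eq_iff ac_simps)

lemma conj_transpose_zero: "conj_transpose (0::complex^'n^'n) = 0"
  by (simp add: conj_transpose_def vec_eq_iff)

lemma mat_sub_ldistrib: "(A::complex^'n^'n) ** (B - C) = A ** B - A ** C"
  by (simp add: matrix_matrix_mult_def vec_eq_iff right_diff_distrib sum_subtractf)

lemma mv_neg_left: "(- (M::complex^'n^'n)) *v x = - (M *v x)"
  by (simp add: matrix_vector_mult_def vec_eq_iff sum_negf)

lemma cinner_neg_right: "cinner x (- y) = - cinner x y"
  by (simp add: cinner_def sum_negf)

lemma opm_zero: "opm v (\<lambda>i. 0) = 0"
  by (simp add: opm_def vec_eq_iff)

lemma psd_hermitian: "psd M \<Longrightarrow> hermitian M" by (simp add: psd_def)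

lemma psd_quad_val: assumes "psd M" obtains p where "cinner x (M *v x) = of_real p" "0 \<le> p"
  using psd_quad[OF assms, of x] by metis

lemma mv_diff_left: "(P - N) *v x = P *v x - N *v (x::complex^'n)"
  by (simp add: matrix_vector_mult_diff_rdistrib)

lemma pos_unique:
  fixes A P N :: "complex^'n^'n"
  assumes onb: "onb v" and eig: "\<And>i. A *v v i = of_real (lam i) *s v i"
    and P: "psd P" and N: "psd N" and AP: "A = P - N" and PN: "P ** N = 0"
  shows "P = opm v (\<lambda>i. max (lam i) 0)"
proof (rule onb_matrix_ext[OF onb])
  fix i
  have hP: "hermitian P" and hN: "hermitian N" using P N by (auto simp: psd_def)
  have NP: "N ** P = 0"
  proof -
    have "conj_transpose (P ** N) = N ** P"
      using hP hN by (simp add: conj_transpose_mult hermitian_def)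
    then show ?thesis using PN by (simp add: conj_transpose_zero)
  qed
  have PP: "P ** P = P ** A" using PN by (simp add: AP mat_sub_ldistrib)
  have NN: "N ** N = - (N ** A)" using NP by (simp add: AP mat_sub_ldistrib)
  define u where "u = P *v v i"
  define w where "w = N *v v i"
  have Pu: "P *v u = of_real (lam i) *s u"
  proof -
    have "P *v u = (P ** P) *v v i" by (simp add: u_def matrix_vector_mul_assoc)
    also have "\<dots> = (P ** A) *v v i" by (simp add: PP)
    also have "\<dots> = P *v (A *v v i)" by (simp only: matrix_vector_mul_assoc)
    also have "\<dots> = of_real (lam i) *s u" by (simp add: eig mv_smult u_def)
    finally show ?thesis .
  qed
  have Nw: "N *v w = - (of_real (lam i) *s w)"
  proof -
    have "N *v w = (N ** N) *v v i" by (simp add: w_def matrix_vector_mul_assoc)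
    also have "\<dots> = - ((N ** A) *v v i)" by (simp add: NN mv_neg_left)
    also have "(N ** A) *v v i = N *v (A *v v i)" by (simp only: matrix_vector_mul_assoc)
    also have "\<dots> = of_real (lam i) *s w" by (simp add: eig mv_smult w_def)
    finally show ?thesis .
  qed
  obtain p where p: "cinner (v i) u = of_real p" "0 \<le> p" using psd_quad_val[OF P] u_def by metis
  obtain q where q: "cinner (v i) w = of_real q" "0 \<le> q" using psd_quad_val[OF N] w_def by metis
  have uu: "cinner u u = of_real (lam i * p)"
  proof -
    have "cinner u u = cinner (v i) (P *v u)" unfolding u_def by (rule hermitian_cinner[OF hP, symmetric])
    then show ?thesis by (simp add: Pu cinner_smult_right p)
  qed
  have ww: "cinner w w = of_real (- lam i * q)"
  proof -
    have "cinner w w = cinner (v i) (N *v w)" unfolding w_def by (rule hermitian_cinner[OF hN, symmetric])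
    then show ?thesis by (simp add: Nw cinner_neg_right cinner_smult_right q)
  qed
  have uw: "u - w = of_real (lam i) *s v i" by (simp add: u_def w_def eig[symmetric] AP mv_diff_left)
  show "P *v v i = opm v (\<lambda>i. max (lam i) 0) *v v i"
  proof (cases "lam i > 0")
    case True
    have "(norm w)^2 = - lam i * q" using ww by (simp only: cinner_self of_real_eq_iff)
    moreover have "- lam i * q \<le> 0" using True q by simp
    ultimately have "w = 0" by (smt (verit) norm_eq_zero zero_less_power2 norm_ge_zero)
    then show ?thesis using uw True by (simp add: opm_basis[OF onb] u_def)
  next
    case False
    have "(norm u)^2 = lam i * p" using uu by (simp only: cinner_self of_real_eq_iff)
    moreover have "lam i * p \<le> 0" using False p by (simp add: mult_nonpos_nonneg)
    ultimately have "u = 0" by (smt (verit) norm_eq_zero zero_less_power2 norm_ge_zero)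
    then show ?thesis using False by (simp add: opm_basis[OF onb] u_def)
  qed
qed

lemma pos_neg_parts:
  fixes A :: "complex^'n^'n"
  assumes onb: "onb v" and eig: "\<And>i. A *v v i = of_real (lam i) *s v i"
  shows "pos_part A = opm v (\<lambda>i. max (lam i) 0)" and "neg_part A = opm v (\<lambda>i. max (- lam i) 0)"
proof -
  define P0 where "P0 = opm v (\<lambda>i. max (lam i) 0)"
  define N0 where "N0 = opm v (\<lambda>i. max (- lam i) 0)"
  have A: "A = opm v lam" by (rule spectral_opm[OF onb eig])
  have ex: "psd P0 \<and> psd N0 \<and> A = P0 - N0 \<and> P0 ** N0 = 0"
  proof (intro conjI)
    show "psd P0" unfolding P0_def by (rule opm_psd) simp
    show "psd N0" unfolding N0_def by (rule opm_psd) simp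
    have "(\<lambda>i. max (lam i) 0 - max (- lam i) 0) = lam" by (auto simp: fun_eq_iff max_def)
    then show "A = P0 - N0" by (simp add: P0_def N0_def opm_diff A)
    have "(\<lambda>i. max (lam i) 0 * max (- lam i) 0) = (\<lambda>i. 0)" by (auto simp: fun_eq_iff max_def)
    then show "P0 ** N0 = 0" by (simp add: P0_def N0_def opm_mult[OF onb] opm_zero)
  qed
  have uniq: "P = P0 \<and> N = N0" if "psd P" "psd N" "A = P - N" "P ** N = 0" for P N
  proof -
    have "P = P0" unfolding P0_def by (rule pos_unique[OF onb eig that])
    moreover have "N = P - A" by (simp add: that(3))
    moreover have "N0 = P0 - A" using ex by simp
    ultimately show ?thesis by simp
  qed
  show "pos_part A = P0" unfolding pos_part_def
    by (rule the_equality) (use ex uniq in blast)+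
  show "neg_part A = N0" unfolding neg_part_def
    by (rule the_equality) (use ex uniq in blast)+
qed

lemma sqrt_unique:
  fixes R :: "complex^'n^'n"
  assumes onb: "onb v" and f: "\<And>i. 0 \<le> f i" and R: "psd R" and RR: "R ** R = opm v (\<lambda>i. f i * f i)"
  shows "R = opm v f"
proof (rule onb_matrix_ext[OF onb])
  fix i
  have hR: "hermitian R" using R by (simp add: psd_def)
  have RRv: "R *v (R *v v i) = of_real (f i * f i) *s v i"
    by (simp only: matrix_vector_mul_assoc RR opm_basis[OF onb])
  show "R *v v i = opm v f *v v i"
  proof (cases "f i = 0")
    case True
    have "cinner (R *v v i) (R *v v i) = cinner (v i) (R *v (R *v v i))"
      by (rule hermitian_cinner[OF hR, symmetric])
    also have "\<dots> = 0" using True by (simp add: RRv cinner_smult_right)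
    finally have "R *v v i = 0" by (simp add: cinner_self_eq_0)
    then show ?thesis using True by (simp add: opm_basis[OF onb])
  next
    case False
    then have fpos: "f i > 0" using f[of i] by simp
    define u where "u = R *v v i - of_real (f i) *s v i"
    have Ru: "R *v u = - (of_real (f i) *s u)"
      by (simp add: u_def matrix_vector_mult_diff_distrib mv_smult RRv vector_smult_assoc
          vector_ssub_ldistrib algebra_simps)
    obtain p where p: "cinner u (R *v u) = of_real p" "0 \<le> p" using psd_quad_val[OF R] by metis
    have "cinner u (R *v u) = - (of_real (f i) * cinner u u)"
      by (simp add: Ru cinner_neg_right cinner_smult_right)
    also have "\<dots> = of_real (- (f i * (norm u)^2))" by (simp only: cinner_self of_real_mult of_real_minus)
    finally have "p = - (f i * (norm u)^2)" using p by (simp only: of_real_eq_iff)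
    then have "f i * (norm u)^2 \<le> 0" using p by simp
    then have "(norm u)^2 \<le> 0" using fpos by (simp add: mult_le_0_iff)
    then have "u = 0" by simp
    then show ?thesis by (simp add: u_def opm_basis[OF onb])
  qed
qed

lemma trace_norm_opm:
  fixes v :: "'n \<Rightarrow> complex^'n"
  assumes onb: "onb v" and f: "\<And>i. 0 \<le> f i"
  shows "trace_norm (opm v f) = (\<Sum>i\<in>UNIV. f i)"
proof -
  have ct: "conj_transpose (opm v f) ** opm v f = opm v (\<lambda>i. f i * f i)"
    using opm_hermitian[of v f] by (simp add: hermitian_def opm_mult[OF onb])
  have "psd_sqrt (opm v (\<lambda>i. f i * f i)) = opm v f" unfolding psd_sqrt_def
  proof (rule the_equality)
    show "psd (opm v f) \<and> opm v f ** opm v f = opm v (\<lambda>i. f i * f i)"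
      using opm_psd[OF f] opm_mult[OF onb] by simp
    show "R = opm v f" if "psd R \<and> R ** R = opm v (\<lambda>i. f i * f i)" for R
      using sqrt_unique[of v f R] onb f that by blast
  qed
  then show ?thesis by (simp add: trace_norm_def ct opm_trace[OF onb])
qed



lemma mat_scaleR_c: "(c *\<^sub>R (M::complex^'n^'m))$i$j = of_real c * M$i$j"
proof -
  have "(c *\<^sub>R M)$i$j = (c *\<^sub>R (M$i))$j" by (simp only: vector_scaleR_component)
  also have "\<dots> = of_real c * M$i$j" by (rule vec_scaleR_c)
  finally show ?thesis .
qed

lemma hermitian_add: "hermitian M \<Longrightarrow> hermitian N \<Longrightarrow> hermitian (M + N)"
  by (simp add: hermitian_def conj_transpose_def vec_eq_iff)

lemma hermitian_scaleR: "hermitian M \<Longrightarrow> hermitian (c *\<^sub>R M)"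
  by (simp add: hermitian_def conj_transpose_def vec_eq_iff vec_scaleR_c)

lemma mv_scaleR_left: "(c *\<^sub>R (M::complex^'n^'m)) *v x = c *\<^sub>R (M *v x)"
  by (simp add: matrix_vector_mult_def vec_eq_iff mat_scaleR_c vec_scaleR_c sum_distrib_left mult.assoc
      del: vector_scaleR_component)

lemma psd_add: "psd M \<Longrightarrow> psd N \<Longrightarrow> psd (M + N)"
  unfolding psd_cinner_def
  by (auto simp: hermitian_add matrix_vector_mult_add_rdistrib cinner_add_right intro: add_nonneg_nonneg)

lemma psd_scaleR: "psd M \<Longrightarrow> 0 \<le> c \<Longrightarrow> psd (c *\<^sub>R M)"
  unfolding psd_cinner_def
  by (auto simp: hermitian_scaleR mv_scaleR_left cinner_scaleR_right)

lemma trace_scaleR: "trace (c *\<^sub>R (M::complex^'n^'n)) = of_real c * trace M"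
  by (simp add: trace_def mat_scaleR_c sum_distrib_left del: vector_scaleR_component)

lemma hermitian_trace_real: "hermitian M \<Longrightarrow> trace M = of_real (Re (trace M))"
proof -
  assume h: "hermitian M"
  have "M$i$i = of_real (Re (M$i$i))" for i
    using hermitian_entry[OF h, of i i] by (metis Reals_cnj_iff complex_is_Real_iff of_real_Re)
  then have "trace M = (\<Sum>i\<in>UNIV. of_real (Re (M$i$i)))" unfolding trace_def by (metis (no_types))
  then show ?thesis by (simp add: trace_def)
qed

lemma onb_eig_quad: assumes "onb v" "\<And>i. A *v v i = of_real (lam i) *s v i"
  shows "cinner (v i) (A *v v i) = of_real (lam i)"
  using assms by (simp add: cinner_smult_right onb_def)

lemma mono_part:
  fixes B C D :: "complex^'k^'k"
  assumes onb: "onb w" and eig: "\<And>i. B *v w i = of_real (mu i) *s w i"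
    and C: "psd C" and D: "psd D" and BCD: "B = C - D"
  shows "(\<Sum>i\<in>UNIV. max (mu i) 0) \<le> Re (trace C)"
proof -
  have "max (mu i) 0 \<le> Re (cinner (w i) (C *v w i))" for i
  proof -
    have "of_real (mu i) = cinner (w i) (B *v w i)" by (simp add: onb_eig_quad[OF onb eig])
    also have "\<dots> = cinner (w i) (C *v w i) - cinner (w i) (D *v w i)"
      by (simp add: BCD mv_diff_left cinner_diff_right)
    finally have "mu i = Re (cinner (w i) (C *v w i)) - Re (cinner (w i) (D *v w i))"
      by (metis Re_complex_of_real minus_complex.sel(1))
    moreover have "0 \<le> Re (cinner (w i) (C *v w i))" "0 \<le> Re (cinner (w i) (D *v w i))"
      using psd_quad[OF C] psd_quad[OF D] by auto
    ultimately show ?thesis by simp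
  qed
  then have "(\<Sum>i\<in>UNIV. max (mu i) 0) \<le> (\<Sum>i\<in>UNIV. Re (cinner (w i) (C *v w i)))"
    by (rule sum_mono)
  also have "\<dots> = Re (trace C)" by (simp add: onb_trace[OF onb])
  finally show ?thesis .
qed



lemma sum_max_split: "(\<Sum>i\<in>UNIV. (lam i :: real)) = (\<Sum>i\<in>UNIV. max (lam i) 0) - (\<Sum>i\<in>UNIV. max (- lam i) 0)"
  unfolding sum_subtractf[symmetric] by (intro sum.cong) (auto simp: max_def)

lemma opm_split: "opm v lam = opm v (\<lambda>i. max (lam i) 0) - opm v (\<lambda>i. max (- lam i) 0)"
proof -
  have "(\<lambda>i. max (lam i) 0 - max (- lam i) 0) = lam" by (auto simp: fun_eq_iff max_def)
  then show ?thesis by (simp add: opm_diff)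
qed

theorem theorem3:
  fixes A :: "complex^'n^'n" and B :: "complex^'k^'k"
  assumes "hermitian A" and "hermitian B"
  shows "(\<exists>\<Phi> :: complex^'n^'n \<Rightarrow> complex^'k^'k.
            (\<forall>X. hermitian X \<longrightarrow> hermitian (\<Phi> X)) \<and>
            (\<forall>X Y. hermitian X \<longrightarrow> hermitian Y \<longrightarrow> \<Phi> (X + Y) = \<Phi> X + \<Phi> Y) \<and>
            (\<forall>(c::real) X. hermitian X \<longrightarrow> \<Phi> (c *\<^sub>R X) = c *\<^sub>R \<Phi> X) \<and>
            (\<forall>X. psd X \<longrightarrow> psd (\<Phi> X)) \<and>
            (\<forall>X. hermitian X \<longrightarrow> trace (\<Phi> X) = trace X) \<and>
            \<Phi> A = B)
         \<longleftrightarrow> (trace A = trace B \<and>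
              trace_norm (pos_part A) \<ge> trace_norm (pos_part B) \<and>
              trace_norm (neg_part A) \<ge> trace_norm (neg_part B))"
proof -
  obtain v lam where onbA: "onb v" and eigA: "\<And>i. A *v v i = of_real (lam i) *s v i"
    using spectral[OF assms(1)] by blast
  obtain w mu where onbB: "onb w" and eigB: "\<And>i. B *v w i = of_real (mu i) *s w i"
    using spectral[OF assms(2)] by blast
  define ap where "ap = (\<Sum>i\<in>UNIV. max (lam i) 0)"
  define an where "an = (\<Sum>i\<in>UNIV. max (- lam i) 0)"
  define bp where "bp = (\<Sum>i\<in>UNIV. max (mu i) 0)"
  define bn where "bn = (\<Sum>i\<in>UNIV. max (- mu i) 0)"
  define Ap where "Ap = opm v (\<lambda>i. max (lam i) 0)"
  define An where "An = opm v (\<lambda>i. max (- lam i) 0)"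
  define Bp where "Bp = opm w (\<lambda>i. max (mu i) 0)"
  define Bn where "Bn = opm w (\<lambda>i. max (- mu i) 0)"
  have pA: "pos_part A = Ap" "neg_part A = An"
    using pos_neg_parts[OF onbA eigA] by (simp_all add: Ap_def An_def)
  have pB: "pos_part B = Bp" "neg_part B = Bn"
    using pos_neg_parts[OF onbB eigB] by (simp_all add: Bp_def Bn_def)
  have tn: "trace_norm Ap = ap" "trace_norm An = an" "trace_norm Bp = bp" "trace_norm Bn = bn"
    using trace_norm_opm[of v "\<lambda>i. max (lam i) 0"] trace_norm_opm[of v "\<lambda>i. max (- lam i) 0"]
      trace_norm_opm[of w "\<lambda>i. max (mu i) 0"] trace_norm_opm[of w "\<lambda>i. max (- mu i) 0"] onbA onbB
    by (simp_all add: Ap_def An_def Bp_def Bn_def ap_def an_def bp_def bn_def)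
  have Aeq: "A = Ap - An" using spectral_opm[OF onbA eigA] opm_split by (simp add: Ap_def An_def)
  have Beq: "B = Bp - Bn" using spectral_opm[OF onbB eigB] opm_split by (simp add: Bp_def Bn_def)
  have trAp: "trace Ap = of_real ap" and trAn: "trace An = of_real an"
    and trBp: "trace Bp = of_real bp" and trBn: "trace Bn = of_real bn"
    by (simp_all add: Ap_def An_def Bp_def Bn_def ap_def an_def bp_def bn_def opm_trace onbA onbB)
  have trA: "trace A = of_real (ap - an)" by (simp add: Aeq trace_sub trAp trAn)
  have trB: "trace B = of_real (bp - bn)" by (simp add: Beq trace_sub trBp trBn)
  have psdAp: "psd Ap" and psdAn: "psd An" and psdBp: "psd Bp" and psdBn: "psd Bn"
    by (simp_all add: Ap_def An_def Bp_def Bn_def opm_psd)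
  have ap0: "0 \<le> ap" and an0: "0 \<le> an" and bp0: "0 \<le> bp" and bn0: "0 \<le> bn"
    by (simp_all add: ap_def an_def bp_def bn_def sum_nonneg)
  show ?thesis unfolding pA pB tn
  proof
    assume "\<exists>\<Phi> :: complex^'n^'n \<Rightarrow> complex^'k^'k.
            (\<forall>X. hermitian X \<longrightarrow> hermitian (\<Phi> X)) \<and>
            (\<forall>X Y. hermitian X \<longrightarrow> hermitian Y \<longrightarrow> \<Phi> (X + Y) = \<Phi> X + \<Phi> Y) \<and>
            (\<forall>(c::real) X. hermitian X \<longrightarrow> \<Phi> (c *\<^sub>R X) = c *\<^sub>R \<Phi> X) \<and>
            (\<forall>X. psd X \<longrightarrow> psd (\<Phi> X)) \<and>
            (\<forall>X. hermitian X \<longrightarrow> trace (\<Phi> X) = trace X) \<and>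
            \<Phi> A = B"
    then obtain \<Phi> :: "complex^'n^'n \<Rightarrow> complex^'k^'k" where
      h1: "\<And>X. hermitian X \<Longrightarrow> hermitian (\<Phi> X)" and
      h2: "\<And>X Y. hermitian X \<Longrightarrow> hermitian Y \<Longrightarrow> \<Phi> (X + Y) = \<Phi> X + \<Phi> Y" and
      h3: "\<And>c X. hermitian X \<Longrightarrow> \<Phi> (c *\<^sub>R X) = c *\<^sub>R \<Phi> X" and
      h4: "\<And>X. psd X \<Longrightarrow> psd (\<Phi> X)" and
      h5: "\<And>X. hermitian X \<Longrightarrow> trace (\<Phi> X) = trace X" and
      h6: "\<Phi> A = B" by blast
    have hAp: "hermitian Ap" and hAn: "hermitian An" using psdAp psdAn by (simp_all add: psd_def)
    have Ae: "A = Ap + (-1) *\<^sub>R An" by (simp add: Aeq)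
    have "\<Phi> A = \<Phi> (Ap + (-1) *\<^sub>R An)" using Ae by (rule arg_cong)
    also have "\<dots> = \<Phi> Ap + \<Phi> ((-1) *\<^sub>R An)" by (rule h2[OF hAp hermitian_scaleR[OF hAn]])
    also have "\<dots> = \<Phi> Ap + (-1) *\<^sub>R \<Phi> An" by (simp only: h3[OF hAn])
    finally have "\<Phi> A = \<Phi> Ap - \<Phi> An" by simp
    then have BCD: "B = \<Phi> Ap - \<Phi> An" using h6 by simp
    have C: "psd (\<Phi> Ap)" and D: "psd (\<Phi> An)" using h4 psdAp psdAn by auto
    have trC: "trace (\<Phi> Ap) = of_real ap" using h5[OF hAp] trAp by simp
    have trD: "trace (\<Phi> An) = of_real an" using h5[OF hAn] trAn by simp
    have "bp \<le> ap" using mono_part[OF onbB eigB C D BCD] trC by (simp add: bp_def)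
    moreover have "bn \<le> an"
    proof -
      have eig': "(- B) *v w i = of_real (- mu i) *s w i" for i
        by (simp add: mv_neg_left eigB vector_smult_lneg)
      have "- B = \<Phi> An - \<Phi> Ap" using BCD by simp
      from mono_part[OF onbB eig' D C this] trD show ?thesis by (simp add: bn_def)
    qed
    moreover have "trace A = trace B" using h5[OF assms(1)] h6 by simp
    ultimately show "trace A = trace B \<and> bp \<le> ap \<and> bn \<le> an" by simp
  next
    assume H: "trace A = trace B \<and> bp \<le> ap \<and> bn \<le> an"
    then have bpa: "bp \<le> ap" and bna: "bn \<le> an" by auto
    have "complex_of_real (ap - an) = complex_of_real (bp - bn)" using H trA trB by simp
    then have "ap - an = bp - bn" by (simp only: of_real_eq_iff)
    define d where "d = ap - bp"
    have d2: "d = an - bn" using \<open>ap - an = bp - bn\<close> by (simp add: d_def)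
    have d0: "0 \<le> d" using bpa by (simp add: d_def)
    define S where "S = {i. 0 < lam i}"
    define f where "f X = Re (\<Sum>i\<in>S. cinner (v i) (X *v v i))" for X
    define g where "g X = Re (trace X) - f X" for X
    define \<sigma> where "\<sigma> = opm w (\<lambda>i. 1 / real CARD('k))"
    have psd\<sigma>: "psd \<sigma>" by (simp add: \<sigma>_def opm_psd)
    have tr\<sigma>: "trace \<sigma> = 1" by (simp add: \<sigma>_def opm_trace[OF onbB])
    define M1 where "M1 = (if ap = 0 then \<sigma> else (1 / ap) *\<^sub>R (Bp + d *\<^sub>R \<sigma>))"
    define M2 where "M2 = (if an = 0 then \<sigma> else (1 / an) *\<^sub>R (Bn + d *\<^sub>R \<sigma>))"
    have psdM1: "psd M1" unfolding M1_def
      using psd\<sigma> psdBp d0 ap0 by (auto intro!: psd_scaleR psd_add)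
    have psdM2: "psd M2" unfolding M2_def
      using psd\<sigma> psdBn d0 an0 by (auto intro!: psd_scaleR psd_add)
    have trM1: "trace M1 = 1"
    proof (cases "ap = 0")
      case True then show ?thesis by (simp add: M1_def tr\<sigma>)
    next
      case False
      have "trace M1 = of_real (1 / ap) * (of_real bp + of_real d)"
        using False by (simp add: M1_def trace_add trace_scaleR trBp tr\<sigma>)
      also have "\<dots> = 1" using False by (simp add: d_def field_simps)
      finally show ?thesis .
    qed
    have trM2: "trace M2 = 1"
    proof (cases "an = 0")
      case True then show ?thesis by (simp add: M2_def tr\<sigma>)
    next
      case False
      have "trace M2 = of_real (1 / an) * (of_real bn + of_real d)"
        using False by (simp add: M2_def trace_add trace_scaleR trBn tr\<sigma>)
      also have "\<dots> = 1" using False by (simp add: d2 field_simps)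
      finally show ?thesis .
    qed
    have sc1: "ap *\<^sub>R M1 = Bp + d *\<^sub>R \<sigma>"
    proof (cases "ap = 0")
      case True
      then have "bp = 0" using bp0 bpa by simp
      then have "\<forall>i\<in>UNIV. max (mu i) 0 = 0" unfolding bp_def
        by (subst sum_nonneg_eq_0_iff[symmetric]) auto
      then have "Bp = 0" unfolding Bp_def using opm_zero[of w] by simp
      moreover have "d = 0" using True \<open>bp = 0\<close> by (simp add: d_def)
      ultimately show ?thesis using True by simp
    next
      case False then show ?thesis by (simp add: M1_def)
    qed
    have sc2: "an *\<^sub>R M2 = Bn + d *\<^sub>R \<sigma>"
    proof (cases "an = 0")
      case True
      then have "bn = 0" using bn0 bna by simp
      then have "\<forall>i\<in>UNIV. max (- mu i) 0 = 0" unfolding bn_def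
        by (subst sum_nonneg_eq_0_iff[symmetric]) auto
      then have "Bn = 0" unfolding Bn_def using opm_zero[of w] by simp
      moreover have "d = 0" using True \<open>bn = 0\<close> by (simp add: d2)
      ultimately show ?thesis using True by simp
    next
      case False then show ?thesis by (simp add: M2_def)
    qed
    define \<Phi> where "\<Phi> X = f X *\<^sub>R M1 + g X *\<^sub>R M2" for X
    have f_add: "f (X + Y) = f X + f Y" for X Y
      by (simp add: f_def matrix_vector_mult_add_rdistrib cinner_add_right sum.distrib)
    have f_scale: "f (c *\<^sub>R X) = c * f X" for c X
      by (simp add: f_def mv_scaleR_left cinner_scaleR_right sum_distrib_left[symmetric])
    have g_add: "g (X + Y) = g X + g Y" for X Y
      by (simp add: g_def f_add trace_add)
    have g_scale: "g (c *\<^sub>R X) = c * g X" for c X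
      by (simp add: g_def f_scale trace_scaleR algebra_simps)
    have f_nonneg: "0 \<le> f X" if "psd X" for X
      unfolding f_def Re_sum using psd_quad[OF that] by (intro sum_nonneg) auto
    have g_nonneg: "0 \<le> g X" if "psd X" for X
    proof -
      have "f X \<le> (\<Sum>i\<in>UNIV. Re (cinner (v i) (X *v v i)))"
        unfolding f_def Re_sum using psd_quad[OF that] by (intro sum_mono2[where B="UNIV :: 'n set"]) auto
      also have "\<dots> = Re (trace X)" by (simp add: onb_trace[OF onbA])
      finally show ?thesis by (simp add: g_def)
    qed
    have fA: "f A = ap"
    proof -
      have "f A = (\<Sum>i\<in>S. lam i)" by (simp add: f_def onb_eig_quad[OF onbA eigA])
      also have "\<dots> = (\<Sum>i\<in>UNIV. if 0 < lam i then lam i else 0)"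
        unfolding S_def by (subst sum.inter_filter[symmetric]) auto
      also have "\<dots> = ap" unfolding ap_def by (intro sum.cong) (auto simp: max_def)
      finally show ?thesis .
    qed
    have gA: "g A = - an" by (simp add: g_def fA trA)
    show "\<exists>\<Phi> :: complex^'n^'n \<Rightarrow> complex^'k^'k.
            (\<forall>X. hermitian X \<longrightarrow> hermitian (\<Phi> X)) \<and>
            (\<forall>X Y. hermitian X \<longrightarrow> hermitian Y \<longrightarrow> \<Phi> (X + Y) = \<Phi> X + \<Phi> Y) \<and>
            (\<forall>(c::real) X. hermitian X \<longrightarrow> \<Phi> (c *\<^sub>R X) = c *\<^sub>R \<Phi> X) \<and>
            (\<forall>X. psd X \<longrightarrow> psd (\<Phi> X)) \<and>
            (\<forall>X. hermitian X \<longrightarrow> trace (\<Phi> X) = trace X) \<and>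
            \<Phi> A = B"
    proof (rule exI[of _ \<Phi>], intro conjI allI impI)
      fix X :: "complex^'n^'n"
      show "hermitian (\<Phi> X)"
        using psdM1 psdM2 by (simp add: \<Phi>_def psd_def hermitian_add hermitian_scaleR)
    next
      fix X Y :: "complex^'n^'n"
      show "\<Phi> (X + Y) = \<Phi> X + \<Phi> Y"
        by (simp add: \<Phi>_def f_add g_add scaleR_add_left algebra_simps)
    next
      fix c :: real and X :: "complex^'n^'n"
      show "\<Phi> (c *\<^sub>R X) = c *\<^sub>R \<Phi> X"
        by (simp add: \<Phi>_def f_scale g_scale scaleR_add_right)
    next
      fix X :: "complex^'n^'n" assume "psd X"
      then show "psd (\<Phi> X)" unfolding \<Phi>_def
        using psdM1 psdM2 f_nonneg g_nonneg by (intro psd_add psd_scaleR) auto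
    next
      fix X :: "complex^'n^'n" assume "hermitian X"
      have "trace (\<Phi> X) = of_real (f X) + of_real (g X)"
        by (simp add: \<Phi>_def trace_add trace_scaleR trM1 trM2)
      also have "\<dots> = of_real (Re (trace X))" by (simp add: g_def)
      also have "\<dots> = trace X" using hermitian_trace_real[OF \<open>hermitian X\<close>] by simp
      finally show "trace (\<Phi> X) = trace X" .
    next
      have "\<Phi> A = ap *\<^sub>R M1 - an *\<^sub>R M2" by (simp add: \<Phi>_def fA gA)
      also have "\<dots> = B" by (simp add: sc1 sc2 Beq)
      finally show "\<Phi> A = B" .
    qed
  qed
qed

end
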